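(* Let $p_1,p_2\in\mathbb{Z}^3$ be distinct, and let $\pi_1,\pi_2$ be two distinct integer affine planes in $\mathbb{R}^3$, both containing the line through $p_1$ and $p_2$ and neither containing the origin $O$. Then for arbitrary $p_3\in\pi_1\setminus\pi_2$ and $p_4\in\pi_2\setminus\pi_1$, \[ |\omega(p_1,p_2;p_3,p_4)|=\frac{{\rm Isin}(\pi_1,\pi_2)}{{\rm I}\ell(p_1,p_2)\,{\rm Id}(O,\pi_1)\,{\rm Id}(O,\pi_2)} . \]
   Context: $\omega(p_1,p_2;p_3,p_4)=\det(p_2-p_1,p_3-p_1,p_4-p_1)/(\det(p_1,p_2,p_3)\det(p_1,p_2,p_4))$, where $\det(u,v,w)$ is the determinant of the matrix with columns $u,v,w$. An integer plane is an affine plane containing a full-rank integer sublattice. ${\rm I}\ell(p,q)$ (integer length) is the number of integer points in the interior of segment $pq$ plus one. ${\rm Id}(p,\pi)$ (integer distance from integer point $p$ to integer plane $\pi$) is the index of the sublattice generated by all integer vectors with endpoints in $\{p\}\cup\pi$ in the lattice of integer vectors of the affine span of $p$ and $\pi$. ${\rm Isin}(\pi_1,\pi_2)$ (integer sine) is the index of the sublattice generated by all integer vectors of $\pi_1$ and of $\pi_2$ in the lattice of integer vectors of the affine span of $\pi_1\cup\pi_2$. *)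

theory Defs
  imports "HOL-Analysis.Analysis"
begin

type_synonym pt = "real^3"

definition int_pt :: "pt \<Rightarrow> bool" where
  "int_pt x \<longleftrightarrow> (\<forall>i. x $ i \<in> \<int>)"

definition det3 :: "pt \<Rightarrow> pt \<Rightarrow> pt \<Rightarrow> real" where
  "det3 u v w = det (transpose (vector [u, v, w] :: real^3^3))"

definition omega :: "pt \<Rightarrow> pt \<Rightarrow> pt \<Rightarrow> pt \<Rightarrow> real" where
  "omega p1 p2 p3 p4 =
     det3 (p2 - p1) (p3 - p1) (p4 - p1) / (det3 p1 p2 p3 * det3 p1 p2 p4)"

text \<open>Integer plane: an affine plane whose integer points affinely span it
  (i.e. it contains a full-rank integer sublattice).\<close>
definition integer_plane :: "pt set \<Rightarrow> bool" where
  "integer_plane P \<longleftrightarrow> affine P \<and> aff_dim P = 2 \<and>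
     affine hull {x \<in> P. int_pt x} = P"

definition int_vecs :: "pt set \<Rightarrow> pt set" where
  "int_vecs S = {x - y | x y. x \<in> S \<and> y \<in> S \<and> int_pt x \<and> int_pt y}"

definition int_span :: "pt set \<Rightarrow> pt set" where
  "int_span S = {(\<Sum>v\<in>F. of_int (c v) *\<^sub>R v) | F c. finite F \<and> F \<subseteq> S}"

definition lattice_index :: "pt set \<Rightarrow> pt set \<Rightarrow> nat" where
  "lattice_index L M = card ((\<lambda>x. {y \<in> M. x - y \<in> L}) ` M)"

definition int_length :: "pt \<Rightarrow> pt \<Rightarrow> nat" where
  "int_length p q = card {x \<in> open_segment p q. int_pt x} + 1"

definition int_dist :: "pt \<Rightarrow> pt set \<Rightarrow> nat" where
  "int_dist p P = lattice_index (int_span (int_vecs (insert p P)))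
                                (int_vecs (affine hull (insert p P)))"

definition int_sin :: "pt set \<Rightarrow> pt set \<Rightarrow> nat" where
  "int_sin P1 P2 = lattice_index (int_span (int_vecs P1 \<union> int_vecs P2))
                                 (int_vecs (affine hull (P1 \<union> P2)))"

end

theory Submission
  imports Defs "HOL-Analysis.Cross3"
begin

lemma dot3: "(x::real^3) \<bullet> y = x$1*y$1 + x$2*y$2 + x$3*y$3"
  by (simp add: inner_vec_def sum_3)

lemma det3_expand: "det3 u v w =
  u$1* v$2* w$3 - u$1* v$3* w$2 - u$2* v$1* w$3 + u$2* v$3* w$1 + u$3* v$1* w$2 - u$3* v$2* w$1"
  by (simp add: det3_def det_3 transpose_def algebra_simps)

lemma cross3c: "(cross3 x y)$1 = x$2*y$3 - x$3*y$2" "(cross3 x y)$2 = x$3*y$1 - x$1*y$3"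
   "(cross3 x y)$3 = x$1*y$2 - x$2*y$1"
  by (simp_all add: cross3_def)

lemma int_pt_iff: "int_pt x \<longleftrightarrow> x$1 \<in> \<int> \<and> x$2 \<in> \<int> \<and> x$3 \<in> \<int>"
  by (simp add: int_pt_def forall_3)

lemma vec3_eq: "(x::real^3) = y \<longleftrightarrow> x$1 = y$1 \<and> x$2 = y$2 \<and> x$3 = y$3"
  by (simp add: vec_eq_iff forall_3)

lemma int_pt_diff: "int_pt x \<Longrightarrow> int_pt y \<Longrightarrow> int_pt (x - y)"
  by (simp add: int_pt_iff)
lemma int_pt_add: "int_pt x \<Longrightarrow> int_pt y \<Longrightarrow> int_pt (x + y)"
  by (simp add: int_pt_iff)
lemma int_pt_scale: "int_pt x \<Longrightarrow> int_pt (of_int m *\<^sub>R x)"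
  by (simp add: int_pt_iff)
lemma int_pt_0: "int_pt 0" by (simp add: int_pt_iff)
lemma int_pt_dot: "int_pt x \<Longrightarrow> int_pt y \<Longrightarrow> x \<bullet> y \<in> \<int>"
  by (simp add: int_pt_iff dot3)
lemma int_pt_cross: "int_pt x \<Longrightarrow> int_pt y \<Longrightarrow> int_pt (cross3 x y)"
  by (simp add: int_pt_iff cross3c)
lemma int_pt_det3: "int_pt x \<Longrightarrow> int_pt y \<Longrightarrow> int_pt z \<Longrightarrow> det3 x y z \<in> \<int>"
  by (simp add: int_pt_iff det3_expand)

lemma int_span_sub:
  assumes "S \<subseteq> T" "0 \<in> T" "\<And>x y. x \<in> T \<Longrightarrow> y \<in> T \<Longrightarrow> x + y \<in> T"
    "\<And>x m. x \<in> T \<Longrightarrow> of_int m *\<^sub>R x \<in> T"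
  shows "int_span S \<subseteq> T"
proof
  fix x assume "x \<in> int_span S"
  then obtain F c where x: "x = (\<Sum>v\<in>F. of_int (c v) *\<^sub>R v)" "finite F" "F \<subseteq> S"
    unfolding int_span_def by blast
  have "F \<subseteq> S \<Longrightarrow> (\<Sum>v\<in>F. of_int (c v) *\<^sub>R v) \<in> T" using x(2)
  proof (induction F rule: finite_induct)
    case empty then show ?case using assms(2) by simp
  next
    case (insert a F)
    then show ?case using assms by auto
  qed
  then show "x \<in> T" using x by simp
qed

lemma int_span_comb:
  assumes "x \<in> S" "y \<in> S"
  shows "x + of_int m *\<^sub>R y \<in> int_span S"
proof (cases "x = y")
  case True
  have "x + of_int m *\<^sub>R y = (\<Sum>v\<in>{x}. of_int ((\<lambda>_. 1 + m) v) *\<^sub>R v)"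
    using True by (simp add: algebra_simps)
  then show ?thesis unfolding int_span_def using assms
    by (intro CollectI exI[of _ "{x}"] exI[of _ "\<lambda>_. 1 + m"]) simp
next
  case False
  have "x + of_int m *\<^sub>R y = (\<Sum>v\<in>{x,y}. of_int ((\<lambda>v. if v = x then 1 else m) v) *\<^sub>R v)"
    using False by simp
  then show ?thesis unfolding int_span_def using assms
    by (intro CollectI exI[of _ "{x,y}"] exI[of _ "\<lambda>v. if v = x then 1 else m"]) simp
qed

lemma int_subgroup:
  fixes S :: "int set"
  assumes "a \<in> S" "a \<noteq> 0" "\<And>x y q. x \<in> S \<Longrightarrow> y \<in> S \<Longrightarrow> x - q * y \<in> S"
  shows "\<exists>g>0. g \<in> S \<and> (\<forall>x\<in>S. g dvd x)"
proof -
  have "0 \<in> S" using assms(3)[OF assms(1) assms(1), of 1] by simp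
  have "\<bar>a\<bar> \<in> S"
    using assms(3)[OF \<open>0 \<in> S\<close> assms(1), of 1] assms(1) by (cases "a \<ge> 0") auto
  define P where "P k \<longleftrightarrow> k > 0 \<and> int k \<in> S" for k :: nat
  have Pa: "P (nat \<bar>a\<bar>)" using \<open>\<bar>a\<bar> \<in> S\<close> assms(2) by (simp add: P_def)
  define k0 where "k0 = (LEAST k. P k)"
  have Pk0: "P k0" unfolding k0_def using Pa by (rule LeastI)
  have min: "\<And>k. P k \<Longrightarrow> k0 \<le> k" unfolding k0_def by (rule Least_le)
  have "g dvd x" if "x \<in> S" and g: "g = int k0" for x g
  proof -
    have "x mod g = x - (x div g) * g" by (simp add: algebra_simps)
    then have xm: "x mod g \<in> S" using assms(3)[OF that(1), of "int k0" "x div g"] Pk0 g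
      by (simp add: P_def)
    have "g > 0" using Pk0 g by (simp add: P_def)
    show ?thesis
    proof (rule ccontr)
      assume "\<not> g dvd x"
      then have "x mod g > 0" using \<open>g > 0\<close>
        by (metis dvd_eq_mod_eq_0 order_le_less pos_mod_sign)
      then have "P (nat (x mod g))" using xm by (simp add: P_def)
      then have "k0 \<le> nat (x mod g)" by (rule min)
      moreover have "x mod g < g" using \<open>g > 0\<close> by simp
      ultimately show False using g \<open>x mod g > 0\<close> by arith
    qed
  qed
  then show ?thesis using Pk0 by (intro exI[of _ "int k0"]) (auto simp: P_def)
qed

definition prim :: "pt \<Rightarrow> bool" where
  "prim n \<longleftrightarrow> int_pt n \<and> (\<exists>y. int_pt y \<and> n \<bullet> y = 1)"

lemma Ints_obtain: "x \<in> \<int> \<Longrightarrow> (\<And>i. x = of_int i \<Longrightarrow> P) \<Longrightarrow> P"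
  by (metis Ints_cases)

lemma prim_decomp:
  assumes "int_pt N" "N \<noteq> 0"
  shows "\<exists>h::int. h > 0 \<and> (\<exists>n. prim n \<and> N = of_int h *\<^sub>R n)"
proof -
  define S where "S = {i. \<exists>z. int_pt z \<and> N \<bullet> z = of_int i}"
  obtain a where a: "N \<bullet> N = of_int a" using int_pt_dot[OF assms(1) assms(1)] by (metis Ints_cases)
  have "a \<in> S" unfolding S_def using a assms(1) by blast
  moreover have "a \<noteq> 0" using a assms(2) by auto
  moreover have "x - q * y \<in> S" if xy: "x \<in> S" "y \<in> S" for x y q
  proof -
    obtain zx zy where "int_pt zx" "N \<bullet> zx = of_int x" "int_pt zy" "N \<bullet> zy = of_int y"
      using xy unfolding S_def by blast
    then have "int_pt (zx - of_int q *\<^sub>R zy)" "N \<bullet> (zx - of_int q *\<^sub>R zy) = of_int (x - q * y)"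
      by (auto simp: int_pt_diff int_pt_scale inner_diff_right)
    then show ?thesis unfolding S_def by blast
  qed
  ultimately obtain g where g: "g > 0" "g \<in> S" "\<forall>x\<in>S. g dvd x"
    using int_subgroup[of a S] by blast
  obtain z0 where z0: "int_pt z0" "N \<bullet> z0 = of_int g" using g(2) unfolding S_def by blast
  have comp: "N $ k / of_int g \<in> \<int>" for k
  proof -
    have "int_pt (axis k 1)" by (simp add: int_pt_def axis_def)
    obtain i where "N $ k = of_int i" using assms(1) unfolding int_pt_def by (metis Ints_cases)
    then have "i \<in> S" unfolding S_def using \<open>int_pt (axis k 1)\<close>
      by (intro CollectI exI[of _ "axis k 1"]) (simp add: inner_axis)
    then obtain t where "i = g * t" using g(3) by (auto elim: dvdE)
    then show ?thesis using \<open>N $ k = of_int i\<close> g(1) by simp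
  qed
  define n where "n = (1 / of_int g) *\<^sub>R N"
  have "int_pt n" using comp unfolding n_def int_pt_def by simp
  moreover have "n \<bullet> z0 = 1" using z0 g(1) unfolding n_def by simp
  moreover have "N = of_int g *\<^sub>R n" using g(1) unfolding n_def by simp
  ultimately show ?thesis using g(1) z0(1) unfolding prim_def by blast
qed

lemma index_lemma:
  fixes n y0 :: pt and g :: int
  assumes n: "int_pt n" and y0: "int_pt y0" "n \<bullet> y0 = 1" and g: "g > 0"
  shows "lattice_index {z. int_pt z \<and> (\<exists>m::int. n \<bullet> z = of_int (g*m))} {z. int_pt z} = nat g"
proof -
  define L where "L = {z. int_pt z \<and> (\<exists>m::int. n \<bullet> z = of_int (g*m))}"
  define M where "M = {z::pt. int_pt z}"
  define C where "C x = {y \<in> M. x - y \<in> L}" for x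
  have val: "\<exists>i. n \<bullet> x = of_int i" if "int_pt x" for x
    using int_pt_dot[OF n that] by (metis Ints_cases)
  have key: "x - y \<in> L \<longleftrightarrow> g dvd (i - j)"
    if "int_pt x" "int_pt y" "n \<bullet> x = of_int i" "n \<bullet> y = of_int j" for x y i j
  proof -
    have e: "n \<bullet> (x - y) = of_int (i - j)" using that by (simp add: inner_diff_right)
    have "(\<exists>m::int. n \<bullet> (x-y) = of_int (g*m)) \<longleftrightarrow> (\<exists>m::int. i - j = g*m)"
      unfolding e of_int_eq_iff ..
    then show ?thesis unfolding L_def dvd_def using int_pt_diff[OF that(1,2)] by auto
  qed
  have rep: "C x = C (of_int (i mod g) *\<^sub>R y0)" if "int_pt x" "n \<bullet> x = of_int i" for x i
  proof -
    have r: "int_pt (of_int (i mod g) *\<^sub>R y0)" "n \<bullet> (of_int (i mod g) *\<^sub>R y0) = of_int (i mod g)"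
      using y0 by (auto simp: int_pt_scale)
    have "y \<in> C x \<longleftrightarrow> y \<in> C (of_int (i mod g) *\<^sub>R y0)" for y
    proof (cases "int_pt y")
      case True
      then obtain j where j: "n \<bullet> y = of_int j" using val by blast
      have "g dvd (i - j) \<longleftrightarrow> g dvd (i mod g - j)"
        by (metis minus_mod_self2 mod_diff_left_eq mod_eq_dvd_iff mod_mod_trivial dvd_eq_mod_eq_0)
      then show ?thesis unfolding C_def M_def
        using key[OF that(1) True that(2) j] key[OF r(1) True r(2) j] True by auto
    next
      case False then show ?thesis unfolding C_def M_def by auto
    qed
    then show ?thesis by blast
  qed
  have img: "(\<lambda>x. C x) ` M = (\<lambda>k. C (of_int k *\<^sub>R y0)) ` {0..<g}"
  proof
    show "(\<lambda>x. C x) ` M \<subseteq> (\<lambda>k. C (of_int k *\<^sub>R y0)) ` {0..<g}"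
    proof
      fix c assume "c \<in> (\<lambda>x. C x) ` M"
      then obtain x where x: "int_pt x" "c = C x" unfolding M_def by blast
      obtain i where "n \<bullet> x = of_int i" using val[OF x(1)] by blast
      then have "c = C (of_int (i mod g) *\<^sub>R y0)" using rep x by blast
      moreover have "i mod g \<in> {0..<g}" using g by simp
      ultimately show "c \<in> (\<lambda>k. C (of_int k *\<^sub>R y0)) ` {0..<g}" by blast
    qed
  next
    show "(\<lambda>k. C (of_int k *\<^sub>R y0)) ` {0..<g} \<subseteq> (\<lambda>x. C x) ` M"
      unfolding M_def using y0 by (auto intro!: imageI simp: int_pt_scale)
  qed
  have inj: "inj_on (\<lambda>k. C (of_int k *\<^sub>R y0)) {0..<g}"
  proof
    fix k k' assume kk: "k \<in> {0..<g}" "k' \<in> {0..<g}"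
      and eq: "C (of_int k *\<^sub>R y0) = C (of_int k' *\<^sub>R y0)"
    have r: "int_pt (of_int k *\<^sub>R y0)" "n \<bullet> (of_int k *\<^sub>R y0) = of_int k"
       "int_pt (of_int k' *\<^sub>R y0)" "n \<bullet> (of_int k' *\<^sub>R y0) = of_int k'"
      using y0 by (auto simp: int_pt_scale)
    have "of_int k' *\<^sub>R y0 \<in> C (of_int k' *\<^sub>R y0)"
      unfolding C_def M_def using key[OF r(3) r(3) r(4) r(4)] r by auto
    then have "of_int k' *\<^sub>R y0 \<in> C (of_int k *\<^sub>R y0)" using eq by simp
    then have "g dvd (k - k')" unfolding C_def using key[OF r(1) r(3) r(2) r(4)] by auto
    then show "k = k'" using kk
      by (metis atLeastLessThan_iff mod_pos_pos_trivial mod_eq_dvd_iff)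
  qed
  have "lattice_index L M = card ((\<lambda>k. C (of_int k *\<^sub>R y0)) ` {0..<g})"
  proof -
    have eqC: "(\<lambda>x. {y \<in> M. x - y \<in> L}) = C" by (simp add: C_def fun_eq_iff)
    show ?thesis unfolding lattice_index_def eqC img ..
  qed
  also have "\<dots> = nat g" using inj by (simp add: card_image)
  finally show ?thesis unfolding L_def M_def .
qed

lemma plane_normal:
  assumes "integer_plane P"
  shows "\<exists>n e q. prim n \<and> P = {x. n \<bullet> x = of_int e} \<and> int_pt q \<and> q \<in> P"
proof -
  have P: "affine P" "aff_dim P = 2" "affine hull {x\<in>P. int_pt x} = P"
    using assms unfolding integer_plane_def by auto
  obtain B where B: "B \<subseteq> {x\<in>P. int_pt x}" "\<not> affine_dependent B"
      "affine hull {x\<in>P. int_pt x} = affine hull B"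
    using affine_basis_exists by blast
  have "aff_dim B = 2" using B(3) P by (metis aff_dim_affine_hull)
  then have "int (card B) = 3" using aff_dim_affine_independent[OF B(2)] by simp
  then have "card B = 3" by simp
  then obtain q0 q1 q2 where q: "B = {q0,q1,q2}" "q0\<noteq>q1" "q1\<noteq>q2" "q0\<noteq>q2"
    by (auto simp: card_3_iff)
  have "\<not> collinear {q0,q1,q2}" using B(2) q collinear_3_eq_affine_dependent by metis
  moreover have "{q0,q1,q2} = {q1,q0,q2}" by auto
  ultimately have "\<not> collinear {0, q1-q0, q2-q0}" using collinear_3[of q1 q0 q2] by simp
  define N where "N = cross3 (q1-q0) (q2-q0)"
  have "N \<noteq> 0" unfolding N_def using cross_eq_0 \<open>\<not> collinear {0, q1-q0, q2-q0}\<close> by metis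
  have qi: "int_pt q0" "int_pt q1" "int_pt q2" "q0 \<in> P" using B(1) q by auto
  have "int_pt N" unfolding N_def using qi by (simp add: int_pt_cross int_pt_diff)
  obtain h n where hn: "h > 0" "prim n" "N = of_int h *\<^sub>R n"
    using prim_decomp[OF \<open>int_pt N\<close> \<open>N \<noteq> 0\<close>] by blast
  have "int_pt n" using hn(2) by (simp add: prim_def)
  obtain e where e: "n \<bullet> q0 = of_int e" using int_pt_dot[OF \<open>int_pt n\<close> qi(1)] by (metis Ints_cases)
  define H where "H = {x. n \<bullet> x = of_int e}"
  have "N \<bullet> (q1 - q0) = 0" "N \<bullet> (q2 - q0) = 0"
    unfolding N_def by (simp_all add: dot3 cross3c algebra_simps)
  then have "n \<bullet> (q1 - q0) = 0" "n \<bullet> (q2 - q0) = 0" using hn(1,3) by auto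
  then have "B \<subseteq> H" using e q unfolding H_def by (auto simp: inner_diff_right)
  then have "P \<subseteq> H" using B(3) P(3) affine_hyperplane unfolding H_def
    by (metis hull_minimal)
  have "n \<noteq> 0" using hn(2) unfolding prim_def by auto
  then have "aff_dim H = 2" unfolding H_def by simp
  have "P = H"
    using affine_dim_equal[OF P(1) _ _ \<open>P \<subseteq> H\<close>] affine_hyperplane qi(4) P(2)
      \<open>aff_dim H = 2\<close> unfolding H_def by auto
  then show ?thesis using hn(2) qi unfolding H_def by blast
qed

lemma int_vecs_plane:
  assumes "P = {x. n \<bullet> x = d}" "int_pt q" "q \<in> P"
  shows "int_vecs P = {z. int_pt z \<and> n \<bullet> z = 0}"
proof
  show "int_vecs P \<subseteq> {z. int_pt z \<and> n \<bullet> z = 0}"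
    unfolding int_vecs_def using assms(1) by (auto simp: int_pt_diff inner_diff_right)
next
  show "{z. int_pt z \<and> n \<bullet> z = 0} \<subseteq> int_vecs P"
  proof
    fix z assume z: "z \<in> {z. int_pt z \<and> n \<bullet> z = 0}"
    have "z = (q + z) - q" by simp
    moreover have "q + z \<in> P" "int_pt (q + z)" using z assms
      by (auto simp: inner_add_right int_pt_add)
    ultimately show "z \<in> int_vecs P" unfolding int_vecs_def using assms by blast
  qed
qed

lemma int_vecs_UNIV: "int_vecs UNIV = {z. int_pt z}"
proof -
  have "z = z - 0" for z :: pt by simp
  then show ?thesis unfolding int_vecs_def using int_pt_0 int_pt_diff by blast
qed

lemma hull_insert0:
  assumes "n \<noteq> 0" "d \<noteq> 0"
  shows "affine hull (insert 0 {x. n \<bullet> x = d}) = UNIV"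
proof -
  define S where "S = affine hull (insert 0 {x. n \<bullet> x = d})"
  have "subspace S" unfolding S_def subspace_affine by (simp add: hull_inc)
  have "y \<in> S" for y
  proof -
    define p0 where "p0 = (d / (n \<bullet> n)) *\<^sub>R n"
    have np0: "n \<bullet> p0 = d" using assms unfolding p0_def by simp
    define w where "w = y - ((n \<bullet> y) / d) *\<^sub>R p0"
    have "n \<bullet> w = 0" unfolding w_def using np0 assms by (simp add: inner_diff_right)
    have "p0 \<in> S" "p0 + w \<in> S" unfolding S_def using np0 \<open>n \<bullet> w = 0\<close>
      by (auto intro!: hull_inc simp: inner_add_right)
    then have "w \<in> S" using \<open>subspace S\<close> subspace_diff by fastforce
    moreover have "((n \<bullet> y) / d) *\<^sub>R p0 \<in> S" using \<open>p0 \<in> S\<close> \<open>subspace S\<close> subspace_scale by blast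
    ultimately have "((n \<bullet> y) / d) *\<^sub>R p0 + w \<in> S" using \<open>subspace S\<close> subspace_add by blast
    then show ?thesis unfolding w_def by simp
  qed
  then show ?thesis unfolding S_def by auto
qed

lemma int_dist_calc:
  assumes "prim n" "P = {x. n \<bullet> x = of_int e}" "e \<noteq> 0" "int_pt q" "q \<in> P"
  shows "int_dist 0 P = nat \<bar>e\<bar>"
proof -
  obtain y0 where y0: "int_pt y0" "n \<bullet> y0 = 1" and n: "int_pt n" using assms(1) prim_def by auto
  have "n \<noteq> 0" using y0 by auto
  have hull: "affine hull (insert 0 P) = UNIV" using hull_insert0[OF \<open>n \<noteq> 0\<close>, of "of_int e"] assms(2,3)
    by simp
  define T where "T = {z. int_pt z \<and> (\<exists>m::int. n \<bullet> z = of_int (\<bar>e\<bar>*m))}"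
  have "int_span (int_vecs (insert 0 P)) \<subseteq> T"
  proof (rule int_span_sub)
    show "int_vecs (insert 0 P) \<subseteq> T"
    proof
      fix z assume "z \<in> int_vecs (insert 0 P)"
      then obtain a b where ab: "z = a - b" "a \<in> insert 0 P" "b \<in> insert 0 P" "int_pt a" "int_pt b"
        unfolding int_vecs_def by blast
      have va: "\<exists>m::int. n \<bullet> a = of_int (\<bar>e\<bar> * m) \<and> m \<in> {-1,0,1}"
        using ab(2) assms(2)
        by (cases "e \<ge> 0") (auto intro: exI[of _ 0] exI[of _ 1] exI[of _ "-1"])
      have vb: "\<exists>m::int. n \<bullet> b = of_int (\<bar>e\<bar> * m)"
        using ab(3) assms(2)
        by (cases "e \<ge> 0") (auto intro: exI[of _ 0] exI[of _ 1] exI[of _ "-1"])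
      obtain ma mb where "n \<bullet> a = of_int (\<bar>e\<bar> * ma)" "n \<bullet> b = of_int (\<bar>e\<bar> * mb)"
        using va vb by blast
      then have "n \<bullet> z = of_int (\<bar>e\<bar> * (ma - mb))" unfolding ab(1)
        by (simp add: inner_diff_right algebra_simps)
      then show "z \<in> T" unfolding T_def using ab int_pt_diff by blast
    qed
  next
    show "0 \<in> T" unfolding T_def using int_pt_0 by (auto intro: exI[of _ 0])
  next
    fix x y assume "x \<in> T" "y \<in> T"
    then obtain mx my where "int_pt x" "int_pt y" "n \<bullet> x = of_int (\<bar>e\<bar>*mx)" "n \<bullet> y = of_int (\<bar>e\<bar>*my)"
      unfolding T_def by blast
    then have "n \<bullet> (x + y) = of_int (\<bar>e\<bar>*(mx+my))" "int_pt (x+y)"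
      by (auto simp: inner_add_right algebra_simps int_pt_add)
    then show "x + y \<in> T" unfolding T_def by blast
  next
    fix x m assume "x \<in> T"
    then obtain mx where "int_pt x" "n \<bullet> x = of_int (\<bar>e\<bar>*mx)"
      unfolding T_def by blast
    then have "n \<bullet> (of_int m *\<^sub>R x) = of_int (\<bar>e\<bar>*(m*mx))" "int_pt (of_int m *\<^sub>R x)"
      by (auto simp: algebra_simps int_pt_scale)
    then show "of_int m *\<^sub>R x \<in> T" unfolding T_def by blast
  qed
  moreover have "T \<subseteq> int_span (int_vecs (insert 0 P))"
  proof
    fix z assume "z \<in> T"
    then obtain m where z: "int_pt z" "n \<bullet> z = of_int (\<bar>e\<bar>*m)" unfolding T_def by blast
    define m' where "m' = sgn e * m"
    have "\<bar>e\<bar> * m = e * m'" unfolding m'_def by (simp add: abs_sgn algebra_simps)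
    then have nz: "n \<bullet> z = of_int e * of_int m'" using z(2) by (metis of_int_mult)
    have qe: "n \<bullet> q = of_int e" using assms(2,5) by auto
    define w where "w = z - of_int m' *\<^sub>R q"
    have "w = (q + w) - q" by simp
    moreover have "q + w \<in> P" using nz qe assms(2) unfolding w_def
      by (simp add: inner_add_right inner_diff_right algebra_simps)
    moreover have "int_pt (q + w)" "int_pt w" using z assms(4) unfolding w_def
      by (auto simp: int_pt_add int_pt_diff int_pt_scale)
    ultimately have "w \<in> int_vecs (insert 0 P)" unfolding int_vecs_def using assms(4,5) by blast
    moreover have "q \<in> int_vecs (insert 0 P)" unfolding int_vecs_def using assms(4,5) int_pt_0
      by (intro CollectI exI[of _ q] exI[of _ 0]) auto
    ultimately have "w + of_int m' *\<^sub>R q \<in> int_span (int_vecs (insert 0 P))"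
      by (rule int_span_comb)
    then show "z \<in> int_span (int_vecs (insert 0 P))" unfolding w_def by simp
  qed
  ultimately have "int_span (int_vecs (insert 0 P)) = T" by blast
  then have "int_dist 0 P = lattice_index T {z. int_pt z}"
    unfolding int_dist_def hull int_vecs_UNIV by simp
  also have "\<dots> = nat \<bar>e\<bar>" unfolding T_def using index_lemma[OF n y0, of "\<bar>e\<bar>"] assms(3) by simp
  finally show ?thesis .
qed

lemma int_length_calc:
  assumes "prim v" "p2 - p1 = of_int l *\<^sub>R v" "l > 0" "int_pt p1"
  shows "int_length p1 p2 = nat l"
proof -
  obtain y where y: "int_pt y" "v \<bullet> y = 1" and v: "int_pt v" using assms(1) prim_def by auto
  have "v \<noteq> 0" using y by auto
  have p2: "p2 = p1 + of_int l *\<^sub>R v" using assms(2) by (simp add: algebra_simps)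
  have "p1 \<noteq> p2" using p2 \<open>v \<noteq> 0\<close> assms(3) by auto
  have eq: "{x \<in> open_segment p1 p2. int_pt x} = (\<lambda>j. p1 + of_int j *\<^sub>R v) ` {1..<l}"
  proof
    show "{x \<in> open_segment p1 p2. int_pt x} \<subseteq> (\<lambda>j. p1 + of_int j *\<^sub>R v) ` {1..<l}"
    proof
      fix x assume x: "x \<in> {x \<in> open_segment p1 p2. int_pt x}"
      then obtain u where u: "0 < u" "u < 1" "x = (1 - u) *\<^sub>R p1 + u *\<^sub>R p2"
        by (auto simp: in_segment)
      have xe: "x = p1 + (u * of_int l) *\<^sub>R v" using u(3) p2 by (simp add: algebra_simps)
      have "(x - p1) \<bullet> y \<in> \<int>" using x assms(4) y(1) by (auto intro!: int_pt_dot int_pt_diff)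
      moreover have "(x - p1) \<bullet> y = u * of_int l" using xe y(2) by simp
      ultimately obtain j where j: "u * of_int l = of_int j" by (metis Ints_cases)
      have "0 < u * of_int l" "u * of_int l < of_int l" using u assms(3) by auto
      then have "j \<in> {1..<l}" using j by auto
      then show "x \<in> (\<lambda>j. p1 + of_int j *\<^sub>R v) ` {1..<l}" using xe j by auto
    qed
  next
    show "(\<lambda>j. p1 + of_int j *\<^sub>R v) ` {1..<l} \<subseteq> {x \<in> open_segment p1 p2. int_pt x}"
    proof
      fix x assume "x \<in> (\<lambda>j. p1 + of_int j *\<^sub>R v) ` {1..<l}"
      then obtain j where j: "j \<in> {1..<l}" "x = p1 + of_int j *\<^sub>R v" by blast
      define u where "u = (of_int j / of_int l :: real)"
      have "0 < u" "u < 1" using j assms(3) unfolding u_def by auto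
      moreover have "x = (1 - u) *\<^sub>R p1 + u *\<^sub>R p2" using j(2) p2 assms(3) unfolding u_def
        by (simp add: algebra_simps)
      ultimately have "x \<in> open_segment p1 p2" using \<open>p1 \<noteq> p2\<close> by (auto simp: in_segment)
      moreover have "int_pt x" using j(2) assms(4) v by (simp add: int_pt_add int_pt_scale)
      ultimately show "x \<in> {x \<in> open_segment p1 p2. int_pt x}" by blast
    qed
  qed
  have "inj_on (\<lambda>j. p1 + of_int j *\<^sub>R v) {1..<l}"
    using \<open>v \<noteq> 0\<close> by (auto simp: inj_on_def)
  then have "card {x \<in> open_segment p1 p2. int_pt x} = nat (l - 1)"
    unfolding eq by (simp add: card_image)
  then show ?thesis unfolding int_length_def using assms(3) by simp
qed

lemma cross_triple: "cross3 x (cross3 a b) = (x \<bullet> b) *\<^sub>R a - (x \<bullet> a) *\<^sub>R b"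
  by (simp add: vec3_eq cross3c dot3 algebra_simps)

lemma cross_triple2: "cross3 (cross3 a b) c = (a \<bullet> c) *\<^sub>R b - (b \<bullet> c) *\<^sub>R a"
  by (simp add: vec3_eq cross3c dot3 algebra_simps)

lemma cross_anti: "cross3 a b = - cross3 b a"
  by (simp add: vec3_eq cross3c algebra_simps)

lemma par_lemma: assumes "cross3 x N = 0" shows "(N \<bullet> N) *\<^sub>R x = (x \<bullet> N) *\<^sub>R N"
proof -
  have "cross3 N x = 0" using assms cross_anti by (metis neg_equal_0_iff_equal)
  then have "cross3 (cross3 N x) N = 0" by (simp add: cross3_def vec3_eq)
  then show ?thesis unfolding cross_triple2 by (simp add: inner_commute)
qed

lemma det3_cross: "det3 a b c = cross3 a b \<bullet> c"
  by (simp add: det3_expand cross3c dot3 algebra_simps)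

lemma det3_shift: "det3 x y z = det3 x (y - x) (z - x)"
  by (simp add: det3_expand algebra_simps)

lemma det3_rot: "det3 a b w = det3 w a b"
  by (simp add: det3_expand algebra_simps)

lemma ID1: "det3 x a b *\<^sub>R n = (n \<bullet> x) *\<^sub>R cross3 a b + (n \<bullet> a) *\<^sub>R cross3 b x + (n \<bullet> b) *\<^sub>R cross3 x a"
  by (simp add: vec3_eq det3_expand cross3c dot3 algebra_simps)

lemma ID2: "(cross3 v u \<bullet> cross3 v u) *\<^sub>R w = (w \<bullet> cross3 v u) *\<^sub>R cross3 v u
   + ((u \<bullet> u) * (w \<bullet> v) - (u \<bullet> v) * (w \<bullet> u)) *\<^sub>R v + ((v \<bullet> v) * (w \<bullet> u) - (u \<bullet> v) * (w \<bullet> v)) *\<^sub>R u"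
  by (simp add: vec3_eq cross3c dot3 algebra_simps)

lemma ID3: "cross3 v w \<bullet> cross3 v u = (v \<bullet> v) * (w \<bullet> u) - (v \<bullet> u) * (w \<bullet> v)"
  by (simp add: cross3c dot3 algebra_simps)

lemma det3_comb: "det3 (a1 *\<^sub>R v + b1 *\<^sub>R u + c1 *\<^sub>R z) (a2 *\<^sub>R v + b2 *\<^sub>R u + c2 *\<^sub>R z)
   (a3 *\<^sub>R v + b3 *\<^sub>R u + c3 *\<^sub>R z) = det3 v u z *
   (a1*b2*c3 - a1*c2*b3 - b1*a2*c3 + b1*c2*a3 + c1*a2*b3 - c1*b2*a3)"
  by (simp add: det3_expand algebra_simps)

lemma Ints_unit: assumes "a \<in> \<int>" "b \<in> \<int>" "a * b = 1" shows "a * a = (1::real)"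
proof -
  obtain i j where "a = of_int i" "b = of_int j" using assms(1,2) by (metis Ints_cases)
  then have "i * j = 1" using assms(3) by (metis of_int_eq_1_iff of_int_mult)
  then have "i = 1 \<or> i = -1" using zmult_eq_1_iff by blast
  then show ?thesis using \<open>a = of_int i\<close> by auto
qed

lemma lattice_E:
  assumes n1: "prim n1" and n2: "prim n2" and N: "cross3 n1 n2 \<noteq> 0" and v: "prim v"
    and v1: "n1 \<bullet> v = 0" and v2: "n2 \<bullet> v = 0" and u: "int_pt u" "n2 \<bullet> u = 0" "n1 \<bullet> u = of_int g"
    and gen: "\<And>z. int_pt z \<Longrightarrow> n2 \<bullet> z = 0 \<Longrightarrow> \<exists>m::int. n1 \<bullet> z = of_int (g*m)"
  shows "\<exists>s. s * s = 1 \<and> cross3 v u = s *\<^sub>R n2"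
proof -
  define N where "N = cross3 n1 n2"
  obtain yv where yv: "int_pt yv" "v \<bullet> yv = 1" and vi: "int_pt v" using v prim_def by auto
  obtain z2 where z2: "int_pt z2" "n2 \<bullet> z2 = 1" using n2 prim_def by auto
  have "v \<noteq> 0" using yv by auto
  have Nv: "(N \<bullet> N) *\<^sub>R v = (v \<bullet> N) *\<^sub>R N"
    by (rule par_lemma) (simp add: N_def cross_triple v1 v2 inner_commute)
  have "N \<bullet> N \<noteq> 0" using N N_def by simp
  have "v \<bullet> N \<noteq> 0" using Nv \<open>N \<bullet> N \<noteq> 0\<close> \<open>v \<noteq> 0\<close> by auto
  have par: "\<exists>t::int. x = of_int t *\<^sub>R v"
    if x: "int_pt x" "n1 \<bullet> x = 0" "n2 \<bullet> x = 0" for x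
  proof -
    have Nx: "(N \<bullet> N) *\<^sub>R x = (x \<bullet> N) *\<^sub>R N"
      by (rule par_lemma) (simp add: N_def cross_triple x inner_commute)
    define t where "t = (x \<bullet> N) / (v \<bullet> N)"
    have "(N \<bullet> N) *\<^sub>R (t *\<^sub>R v) = t *\<^sub>R ((N \<bullet> N) *\<^sub>R v)" by simp
    also have "\<dots> = (t * (v \<bullet> N)) *\<^sub>R N" unfolding Nv by simp
    also have "t * (v \<bullet> N) = x \<bullet> N" unfolding t_def using \<open>v \<bullet> N \<noteq> 0\<close> by simp
    finally have "(N \<bullet> N) *\<^sub>R x = (N \<bullet> N) *\<^sub>R (t *\<^sub>R v)" unfolding Nx by simp
    then have xt: "x = t *\<^sub>R v" using \<open>N \<bullet> N \<noteq> 0\<close> scaleR_cancel_left by blast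
    have "x \<bullet> yv = t" using xt yv by simp
    moreover have "x \<bullet> yv \<in> \<int>" using x yv by (simp add: int_pt_dot)
    ultimately obtain i where "t = of_int i" by (metis Ints_cases)
    then show ?thesis using xt by blast
  qed
  have decomp: "\<exists>a b c::int. y = of_int a *\<^sub>R v + of_int b *\<^sub>R u + of_int c *\<^sub>R z2"
    if y: "int_pt y" for y
  proof -
    obtain k where k: "n2 \<bullet> y = of_int k" using int_pt_dot[OF _ y] n2 prim_def by (metis Ints_cases)
    define y1 where "y1 = y - of_int k *\<^sub>R z2"
    have y1: "int_pt y1" "n2 \<bullet> y1 = 0" unfolding y1_def using y z2 k
      by (auto simp: int_pt_diff int_pt_scale inner_diff_right)
    obtain m where m: "n1 \<bullet> y1 = of_int (g*m)" using gen[OF y1] by blast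
    define y2 where "y2 = y1 - of_int m *\<^sub>R u"
    have "int_pt y2" "n1 \<bullet> y2 = 0" "n2 \<bullet> y2 = 0" unfolding y2_def using y1 m u
      by (auto simp: int_pt_diff int_pt_scale inner_diff_right)
    then obtain t where "y2 = of_int t *\<^sub>R v" using par by blast
    then have "y = of_int t *\<^sub>R v + of_int m *\<^sub>R u + of_int k *\<^sub>R z2"
      unfolding y2_def y1_def by (simp add: algebra_simps)
    then show ?thesis by blast
  qed
  have ax: "int_pt (axis i 1)" for i :: 3 by (simp add: int_pt_def axis_def)
  obtain a1 b1 c1 where e1: "axis 1 1 = of_int a1 *\<^sub>R v + of_int b1 *\<^sub>R u + of_int c1 *\<^sub>R z2"
    using decomp[OF ax] by blast
  obtain a2 b2 c2 where e2: "axis 2 1 = of_int a2 *\<^sub>R v + of_int b2 *\<^sub>R u + of_int c2 *\<^sub>R z2"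
    using decomp[OF ax] by blast
  obtain a3 b3 c3 where e3: "axis 3 1 = of_int a3 *\<^sub>R v + of_int b3 *\<^sub>R u + of_int c3 *\<^sub>R z2"
    using decomp[OF ax] by blast
  have "det3 (axis 1 1) (axis 2 1) (axis 3 1) = (1::real)"
    by (simp add: det3_expand axis_def)
  then have "det3 v u z2 * (of_int (a1*b2*c3 - a1*c2*b3 - b1*a2*c3 + b1*c2*a3 + c1*a2*b3 - c1*b2*a3)) = 1"
    unfolding e1 e2 e3 det3_comb by (simp only: of_int_mult of_int_add of_int_diff)
  then have s2: "det3 v u z2 * det3 v u z2 = 1"
    by (rule Ints_unit[rotated 2]) (use vi u z2 in \<open>simp_all add: int_pt_det3\<close>)
  have "cross3 (cross3 v u) n2 = 0" unfolding cross_triple2 using v2 u(2) by (simp add: inner_commute)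
  then have pv: "(n2 \<bullet> n2) *\<^sub>R cross3 v u = (cross3 v u \<bullet> n2) *\<^sub>R n2" by (rule par_lemma)
  have "n2 \<bullet> n2 \<noteq> 0" using z2 by auto
  define c where "c = (cross3 v u \<bullet> n2) / (n2 \<bullet> n2)"
  have "cross3 v u = (1 / (n2 \<bullet> n2)) *\<^sub>R ((n2 \<bullet> n2) *\<^sub>R cross3 v u)"
    using \<open>n2 \<bullet> n2 \<noteq> 0\<close> by simp
  also have "\<dots> = c *\<^sub>R n2" unfolding pv c_def by simp
  finally have cv: "cross3 v u = c *\<^sub>R n2" .
  have "det3 v u z2 = c" unfolding det3_cross cv using z2 by simp
  then show ?thesis using s2 cv by blast
qed

lemma omega_calc:
  fixes e1 e2 l g s :: real
  assumes h1: "n1 \<bullet> p1 = e1" "n1 \<bullet> p2 = e1" "n1 \<bullet> p3 = e1" "n1 \<bullet> p4 \<noteq> e1"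
    and h2: "n2 \<bullet> p1 = e2" "n2 \<bullet> p2 = e2" "n2 \<bullet> p4 = e2" "n2 \<bullet> p3 \<noteq> e2"
    and pl: "p2 - p1 = l *\<^sub>R v" "l \<noteq> 0"
    and hu: "n1 \<bullet> u = g" "n2 \<bullet> u = 0" "cross3 v u = s *\<^sub>R n2" "s * s = 1"
    and nz: "e1 \<noteq> 0" "e2 \<noteq> 0" "n1 \<noteq> 0" "n2 \<noteq> 0" "g \<noteq> 0"
  shows "omega p1 p2 p3 p4 = g * s / (l * e1 * e2)"
proof -
  define a where "a = p2 - p1"
  define b where "b = p3 - p1"
  define w where "w = p4 - p1"
  have na: "n1 \<bullet> a = 0" "n2 \<bullet> a = 0" "n1 \<bullet> b = 0" "n2 \<bullet> w = 0"
    unfolding a_def b_def w_def using h1 h2 by (simp_all add: inner_diff_right)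
  have "l * (n1 \<bullet> v) = 0" "l * (n2 \<bullet> v) = 0" using na(1,2) pl(1) unfolding a_def by simp_all
  then have nv: "n1 \<bullet> v = 0" "n2 \<bullet> v = 0" using pl(2) by simp_all
  have nb: "n2 \<bullet> b \<noteq> 0" unfolding b_def using h2 by (simp add: inner_diff_right)
  have nw: "n1 \<bullet> w \<noteq> 0" unfolding w_def using h1 by (simp add: inner_diff_right)
  define K1 where "K1 = n1 \<bullet> n1"
  define K2 where "K2 = n2 \<bullet> n2"
  have K: "K1 \<noteq> 0" "K2 \<noteq> 0" using nz unfolding K1_def K2_def by simp_all
  define Y1 where "Y1 = n1 \<bullet> cross3 a b"
  define Z where "Z = n2 \<bullet> cross3 v w"
  have "det3 p1 a b *\<^sub>R n1 = e1 *\<^sub>R cross3 a b" using ID1[of p1 a b n1] na h1 by simp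
  from arg_cong[OF this, of "\<lambda>x. n1 \<bullet> x"]
  have d1: "det3 p1 a b * K1 = e1 * Y1" unfolding K1_def Y1_def by (simp add: mult.commute)
  have "det3 w a b *\<^sub>R n1 = (n1 \<bullet> w) *\<^sub>R cross3 a b" using ID1[of w a b n1] na by simp
  from arg_cong[OF this, of "\<lambda>x. n1 \<bullet> x"]
  have d2: "det3 a b w * K1 = (n1 \<bullet> w) * Y1" unfolding K1_def Y1_def det3_rot[of a b w]
    by (simp add: mult.commute)
  have "det3 p1 a w *\<^sub>R n2 = e2 *\<^sub>R cross3 a w" using ID1[of p1 a w n2] na h2 by simp
  from arg_cong[OF this, of "\<lambda>x. n2 \<bullet> x"]
  have "det3 p1 a w * K2 = e2 * (n2 \<bullet> cross3 a w)" unfolding K2_def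
    by (simp add: mult.commute)
  moreover have "cross3 a w = l *\<^sub>R cross3 v w" unfolding a_def pl(1)
    by (simp add: vec3_eq cross3c algebra_simps)
  ultimately have d3: "det3 p1 a w * K2 = e2 * l * Z" unfolding Z_def by simp
  have n2s: "n2 = s *\<^sub>R cross3 v u" using hu(3,4) by simp
  have wvu: "w \<bullet> cross3 v u = 0" using hu(3) na(4) by (simp add: inner_commute)
  define Q where "Q = (v \<bullet> v) * (w \<bullet> u) - (v \<bullet> u) * (w \<bullet> v)"
  have "(cross3 v u \<bullet> cross3 v u) * (n1 \<bullet> w) = g * Q"
    using arg_cong[OF ID2[of v u w], of "\<lambda>x. n1 \<bullet> x"] wvu nv hu(1) unfolding Q_def
    by (simp add: inner_add_right inner_diff_right inner_commute)
  moreover have "cross3 v u \<bullet> cross3 v u = K2" unfolding K2_def hu(3) using hu(4) by simp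
  moreover have "Z = s * Q"
    unfolding Z_def Q_def using ID3[of v w u] n2s by (simp add: inner_commute[of "cross3 v u" "cross3 v w"])
  ultimately have d4: "K2 * (n1 \<bullet> w) = g * s * Z" using hu(4)
    by (simp add: mult.assoc)
  have "Z \<noteq> 0" using d4 K(2) nw by auto
  have "v \<noteq> 0" using hu(3) nz(4) hu(4) by auto
  have "Y1 \<noteq> 0"
  proof
    assume "Y1 = 0"
    have "det3 n1 a b *\<^sub>R n1 = K1 *\<^sub>R cross3 a b" using ID1[of n1 a b n1] na unfolding K1_def by simp
    moreover have "det3 n1 a b = Y1" unfolding Y1_def by (simp add: det3_expand dot3 cross3c algebra_simps)
    ultimately have "cross3 a b = 0" using \<open>Y1 = 0\<close> K(1) by simp
    then have "l *\<^sub>R cross3 v b = 0" unfolding a_def pl(1)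
      by (simp add: vec3_eq cross3c algebra_simps)
    then have "cross3 b v = 0" using pl(2) cross_anti[of b v] by simp
    then have "(v \<bullet> v) *\<^sub>R b = (b \<bullet> v) *\<^sub>R v" by (rule par_lemma)
    then have "(v \<bullet> v) * (n2 \<bullet> b) = 0" using nv(2)
      by (metis inner_scaleR_right mult_zero_right)
    then show False using nb \<open>v \<noteq> 0\<close> by simp
  qed
  have o: "omega p1 p2 p3 p4 = det3 a b w / (det3 p1 a b * det3 p1 a w)"
    unfolding omega_def a_def b_def w_def using det3_shift[of p1 p2 p3] det3_shift[of p1 p2 p4] by simp
  have A: "det3 a b w = (n1 \<bullet> w) * Y1 / K1" using d2 K by (simp add: field_simps)
  have B: "det3 p1 a b = e1 * Y1 / K1" using d1 K by (simp add: field_simps)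
  have C: "det3 p1 a w = e2 * l * Z / K2" using d3 K by (simp add: field_simps)
  have W: "n1 \<bullet> w = g * s * Z / K2" using d4 K by (simp add: field_simps)
  show ?thesis unfolding o A B C W using K nz \<open>Z \<noteq> 0\<close> \<open>Y1 \<noteq> 0\<close> pl(2)
    by (simp add: field_simps)
qed

lemma int_sin_calc:
  assumes n1: "prim n1" and P1: "P1 = {x. n1 \<bullet> x = d1}" "int_pt q1" "q1 \<in> P1"
    and P2: "P2 = {x. n2 \<bullet> x = d2}" "int_pt q2" "q2 \<in> P2"
    and hull: "affine hull (P1 \<union> P2) = UNIV"
    and g: "g > 0" "int_pt u" "n2 \<bullet> u = 0" "n1 \<bullet> u = of_int g"
    and gen: "\<And>z. int_pt z \<Longrightarrow> n2 \<bullet> z = 0 \<Longrightarrow> \<exists>m::int. n1 \<bullet> z = of_int (g*m)"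
  shows "int_sin P1 P2 = nat g"
proof -
  obtain y0 where y0: "int_pt y0" "n1 \<bullet> y0 = 1" and n: "int_pt n1" using n1 prim_def by auto
  have V1: "int_vecs P1 = {z. int_pt z \<and> n1 \<bullet> z = 0}" by (rule int_vecs_plane[OF P1])
  have V2: "int_vecs P2 = {z. int_pt z \<and> n2 \<bullet> z = 0}" by (rule int_vecs_plane[OF P2])
  define T where "T = {z. int_pt z \<and> (\<exists>m::int. n1 \<bullet> z = of_int (g*m))}"
  have "int_span (int_vecs P1 \<union> int_vecs P2) \<subseteq> T"
  proof (rule int_span_sub)
    show "int_vecs P1 \<union> int_vecs P2 \<subseteq> T"
    proof
      fix z assume "z \<in> int_vecs P1 \<union> int_vecs P2"
      then show "z \<in> T" unfolding V1 V2 T_def using gen by (auto intro: exI[of _ 0])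
    qed
  next
    show "0 \<in> T" unfolding T_def using int_pt_0 by (auto intro: exI[of _ 0])
  next
    fix x y assume "x \<in> T" "y \<in> T"
    then obtain mx my where "int_pt x" "int_pt y" "n1 \<bullet> x = of_int (g*mx)" "n1 \<bullet> y = of_int (g*my)"
      unfolding T_def by blast
    then have "n1 \<bullet> (x + y) = of_int (g*(mx+my))" "int_pt (x+y)"
      by (auto simp: inner_add_right algebra_simps int_pt_add)
    then show "x + y \<in> T" unfolding T_def by blast
  next
    fix x m assume "x \<in> T"
    then obtain mx where "int_pt x" "n1 \<bullet> x = of_int (g*mx)"
      unfolding T_def by blast
    then have "n1 \<bullet> (of_int m *\<^sub>R x) = of_int (g*(m*mx))" "int_pt (of_int m *\<^sub>R x)"
      by (auto simp: algebra_simps int_pt_scale)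
    then show "of_int m *\<^sub>R x \<in> T" unfolding T_def by blast
  qed
  moreover have "T \<subseteq> int_span (int_vecs P1 \<union> int_vecs P2)"
  proof
    fix z assume "z \<in> T"
    then obtain m where z: "int_pt z" "n1 \<bullet> z = of_int (g*m)" unfolding T_def by blast
    define w where "w = z - of_int m *\<^sub>R u"
    have "w \<in> int_vecs P1" unfolding V1 w_def using z g
      by (simp add: int_pt_diff int_pt_scale inner_diff_right)
    moreover have "u \<in> int_vecs P2" unfolding V2 using g by simp
    ultimately have "w + of_int m *\<^sub>R u \<in> int_span (int_vecs P1 \<union> int_vecs P2)"
      by (intro int_span_comb) auto
    then show "z \<in> int_span (int_vecs P1 \<union> int_vecs P2)" unfolding w_def by simp
  qed
  ultimately have "int_span (int_vecs P1 \<union> int_vecs P2) = T" by blast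
  then have "int_sin P1 P2 = lattice_index T {z. int_pt z}"
    unfolding int_sin_def hull int_vecs_UNIV by simp
  also have "\<dots> = nat g" unfolding T_def using index_lemma[OF n y0 g(1)] by simp
  finally show ?thesis .
qed

theorem proposition4p3:
  fixes p1 p2 p3 p4 :: "real^3" and P1 P2 :: "(real^3) set"
  assumes "int_pt p1" and "int_pt p2" and "p1 \<noteq> p2"
    and "integer_plane P1" and "integer_plane P2" and "P1 \<noteq> P2"
    and "affine hull {p1, p2} \<subseteq> P1" and "affine hull {p1, p2} \<subseteq> P2"
    and "0 \<notin> P1" and "0 \<notin> P2"
    and "p3 \<in> P1 - P2" and "p4 \<in> P2 - P1"
  shows "\<bar>omega p1 p2 p3 p4\<bar> =
    real (int_sin P1 P2) /
      (real (int_length p1 p2) * real (int_dist 0 P1) * real (int_dist 0 P2))"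
proof -
  obtain n1 e1 q1 where Q1: "prim n1" "P1 = {x. n1 \<bullet> x = of_int e1}" "int_pt q1" "q1 \<in> P1"
    using plane_normal[OF assms(4)] by blast
  obtain n2 e2 q2 where Q2: "prim n2" "P2 = {x. n2 \<bullet> x = of_int e2}" "int_pt q2" "q2 \<in> P2"
    using plane_normal[OF assms(5)] by blast
  have n1i: "int_pt n1" and n2i: "int_pt n2" using Q1 Q2 prim_def by auto
  have "n1 \<noteq> 0" "n2 \<noteq> 0" using Q1(1) Q2(1) unfolding prim_def by auto
  have pin: "p1 \<in> P1" "p2 \<in> P1" "p1 \<in> P2" "p2 \<in> P2"
    using assms(7,8) hull_subset[of "{p1,p2}" affine] by auto
  have h1: "n1 \<bullet> p1 = of_int e1" "n1 \<bullet> p2 = of_int e1" "n1 \<bullet> p3 = of_int e1" "n1 \<bullet> p4 \<noteq> of_int e1"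
    using pin assms(11,12) Q1(2) by auto
  have h2: "n2 \<bullet> p1 = of_int e2" "n2 \<bullet> p2 = of_int e2" "n2 \<bullet> p4 = of_int e2" "n2 \<bullet> p3 \<noteq> of_int e2"
    using pin assms(11,12) Q2(2) by auto
  have "e1 \<noteq> 0" "e2 \<noteq> 0" using assms(9,10) Q1(2) Q2(2) by auto
  have "int_pt (p2 - p1)" "p2 - p1 \<noteq> 0" using assms(1,2,3) by (auto simp: int_pt_diff)
  then obtain l v where lv: "l > 0" "prim v" "p2 - p1 = of_int l *\<^sub>R v"
    using prim_decomp by blast
  have "l * (n1 \<bullet> v) = 0" "l * (n2 \<bullet> v) = 0"
    using arg_cong[OF lv(3), of "\<lambda>x. n1 \<bullet> x"] arg_cong[OF lv(3), of "\<lambda>x. n2 \<bullet> x"] h1 h2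
    by (simp_all add: inner_diff_right)
  then have nv: "n1 \<bullet> v = 0" "n2 \<bullet> v = 0" using lv(1) by simp_all
  have N: "cross3 n1 n2 \<noteq> 0"
  proof
    assume "cross3 n1 n2 = 0"
    then have pp: "(n2 \<bullet> n2) *\<^sub>R n1 = (n1 \<bullet> n2) *\<^sub>R n2" by (rule par_lemma)
    define c where "c = (n1 \<bullet> n2) / (n2 \<bullet> n2)"
    have "n2 \<bullet> n2 \<noteq> 0" using \<open>n2 \<noteq> 0\<close> by simp
    have "n1 = (1 / (n2 \<bullet> n2)) *\<^sub>R ((n2 \<bullet> n2) *\<^sub>R n1)" using \<open>n2 \<bullet> n2 \<noteq> 0\<close> by simp
    also have "\<dots> = c *\<^sub>R n2" unfolding pp c_def by simp
    finally have n1c: "n1 = c *\<^sub>R n2" .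
    then have "c \<noteq> 0" using \<open>n1 \<noteq> 0\<close> by auto
    have e: "of_int e1 = c * of_int e2" using h1(1) h2(1) n1c by simp
    have "n1 \<bullet> x = of_int e1 \<longleftrightarrow> n2 \<bullet> x = of_int e2" for x
      unfolding e n1c inner_scaleR_left using \<open>c \<noteq> 0\<close> by simp
    then have "P1 = P2" unfolding Q1(2) Q2(2) by blast
    then show False using assms(6) by simp
  qed
  have hull: "affine hull (P1 \<union> P2) = UNIV"
  proof -
    define H where "H = affine hull (P1 \<union> P2)"
    have "P1 \<subseteq> H" "p4 \<in> H" using assms(12) unfolding H_def by (auto intro: hull_inc)
    have aP1: "affine P1" "aff_dim P1 = 2" using assms(4) integer_plane_def by auto
    have "aff_dim P1 \<le> aff_dim H" using \<open>P1 \<subseteq> H\<close> by (rule aff_dim_subset)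
    moreover have "aff_dim H \<noteq> 2"
    proof
      assume "aff_dim H = 2"
      then have "P1 = H" using affine_dim_equal[OF aP1(1) _ _ \<open>P1 \<subseteq> H\<close>] aP1(2) pin(1)
        unfolding H_def by auto
      then show False using \<open>p4 \<in> H\<close> assms(12) by auto
    qed
    moreover have "aff_dim H \<le> 3" using aff_dim_le_DIM[of H] by simp
    ultimately have "aff_dim H = int DIM(real^3)" using aP1(2) by simp
    then show ?thesis using aff_dim_eq_full[of H] unfolding H_def by simp
  qed
  define S where "S = {i. \<exists>z. int_pt z \<and> n2 \<bullet> z = 0 \<and> n1 \<bullet> z = of_int i}"
  obtain q where q: "int_pt q" "q \<in> P2" "q \<notin> P1"
  proof (rule ccontr)
    assume "\<not> thesis"
    then have "{x \<in> P2. int_pt x} \<subseteq> P1" using that by blast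
    moreover have "affine P1" using assms(4) unfolding integer_plane_def by blast
    ultimately have "affine hull {x \<in> P2. int_pt x} \<subseteq> P1"
      by (intro hull_minimal)
    moreover have "affine hull {x \<in> P2. int_pt x} = P2" using assms(5) unfolding integer_plane_def by blast
    ultimately have "P2 \<subseteq> P1" by simp
    then show False using assms(12) by auto
  qed
  obtain i0 where i0: "n1 \<bullet> (q - p1) = of_int i0"
    using int_pt_dot[OF n1i int_pt_diff[OF q(1) assms(1)]] by (metis Ints_cases)
  have "i0 \<in> S" unfolding S_def using i0 q Q2(2) h2(1) int_pt_diff[OF q(1) assms(1)]
    by (auto simp: inner_diff_right)
  moreover have "i0 \<noteq> 0" using i0 q(3) Q1(2) h1(1) by (auto simp: inner_diff_right)
  moreover have "x - k * y \<in> S" if xy: "x \<in> S" "y \<in> S" for x y k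
  proof -
    obtain zx zy where "int_pt zx" "n2 \<bullet> zx = 0" "n1 \<bullet> zx = of_int x"
        "int_pt zy" "n2 \<bullet> zy = 0" "n1 \<bullet> zy = of_int y"
      using xy unfolding S_def by blast
    then have "int_pt (zx - of_int k *\<^sub>R zy)" "n2 \<bullet> (zx - of_int k *\<^sub>R zy) = 0"
        "n1 \<bullet> (zx - of_int k *\<^sub>R zy) = of_int (x - k * y)"
      by (auto simp: int_pt_diff int_pt_scale inner_diff_right)
    then show ?thesis unfolding S_def by blast
  qed
  ultimately obtain g where g: "g > 0" "g \<in> S" "\<forall>x\<in>S. g dvd x"
    using int_subgroup[of i0 S] by blast
  obtain u where u: "int_pt u" "n2 \<bullet> u = 0" "n1 \<bullet> u = of_int g" using g(2) unfolding S_def by blast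
  have gen: "\<exists>m::int. n1 \<bullet> z = of_int (g*m)" if z: "int_pt z" "n2 \<bullet> z = 0" for z
  proof -
    obtain i where i: "n1 \<bullet> z = of_int i" using int_pt_dot[OF n1i z(1)] by (metis Ints_cases)
    then have "i \<in> S" unfolding S_def using z by blast
    then obtain m where "i = g * m" using g(3) by (auto elim: dvdE)
    then show ?thesis using i by blast
  qed
  obtain s where s: "s * s = 1" "cross3 v u = s *\<^sub>R n2"
    using lattice_E[OF Q1(1) Q2(1) N lv(2) nv u gen] by blast
  have Isin: "int_sin P1 P2 = nat g"
    by (rule int_sin_calc[OF Q1(1) Q1(2-4) Q2(2-4) hull g(1) u]) (rule gen)
  have Il: "int_length p1 p2 = nat l" by (rule int_length_calc[OF lv(2) lv(3) lv(1) assms(1)])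
  have Id1: "int_dist 0 P1 = nat \<bar>e1\<bar>" by (rule int_dist_calc[OF Q1(1,2) \<open>e1 \<noteq> 0\<close> Q1(3,4)])
  have Id2: "int_dist 0 P2 = nat \<bar>e2\<bar>" by (rule int_dist_calc[OF Q2(1,2) \<open>e2 \<noteq> 0\<close> Q2(3,4)])
  have om: "omega p1 p2 p3 p4 = of_int g * s / (of_int l * of_int e1 * of_int e2)"
    by (rule omega_calc[OF h1 h2 lv(3)]) (use lv(1) u s \<open>e1 \<noteq> 0\<close> \<open>e2 \<noteq> 0\<close> \<open>n1 \<noteq> 0\<close> \<open>n2 \<noteq> 0\<close> g(1) in auto)
  have "s = 1 \<or> s = -1" using s(1) square_eq_1_iff by blast
  then have "\<bar>s\<bar> = 1" by auto
  then have "\<bar>omega p1 p2 p3 p4\<bar> = of_int g / (of_int l * \<bar>of_int e1\<bar> * \<bar>of_int e2\<bar>)"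
    unfolding om using g(1) lv(1) by (simp add: abs_mult abs_divide)
  then show ?thesis unfolding Isin Il Id1 Id2 using g(1) lv(1) by simp
qed

end
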